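(* Let $i\in\mathbb{N}$ be fixed. Let $G\in\mathcal{G}_{k,n,p}$ and $v\neq w\in V(G)$, and let $X=X_0,X_1,\dots$ be a simple random walk on $G$. Then \[ \mathbb{P}[T_{wv}=i]=\mathbb{P}_w[X_i=v]\pm\mathcal{O}\!\left(\frac{1}{p^2n^2}\right). \]
   Context: Fix an integer $k\ge2$ and let $p=p(n)$ satisfy $\frac{\log n}{n^{(k-1)/k}}\le p\le 1-\Omega(\frac{\log^4 n}{n})$. $\mathcal{G}_{k,n,p}$ denotes the set of graphs $G$ on $n$ vertices satisfying: (i) $G$ is not bipartite; (ii) $\operatorname{diam}(G)\le k$; (iii) every vertex has degree $d(v)=pn\pm\mathcal{O}(\sqrt{pn\log n})$; (iv) $2|E(G)|=pn^2\pm\mathcal{O}(\sqrt{pn^2\log n})$; (v) $|N(v)\cap N(w)|=p^2n\pm\mathcal{O}(\max\{\sqrt{p^2n\log n},\log n\})$ for all $v\ne w$; (vi) the unit eigenvector $\phi$ of the largest adjacency eigenvalue has entries $\phi_i=\frac1{\sqrt n}\pm\mathcal{O}(\frac{\log^{3/2}n}{\sqrt p\,n\log(pn)})$; (vii) $\lambda_1=(1+o(1))pn$; (viii) $\max\{|\lambda_2|,|\lambda_n|\}=\mathcal{O}(\sqrt{pn})$, where $\lambda_1\ge\dots\ge\lambda_n$ are the adjacency eigenvalues. Asymptotic notation is as $n\to\infty$ with constants independent of $n$. $\mathbb{P}_w[\cdot]=\mathbb{P}[\cdot\mid X_0=w]$, and $T_{wv}$ is the first time the walk started at $w$ hits $v$.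 *)

theory Defs
  imports "HOL-Analysis.Analysis" "Jordan_Normal_Form.Char_Poly"
begin

definition simple_graph :: "nat \<Rightarrow> (nat \<Rightarrow> nat \<Rightarrow> bool) \<Rightarrow> bool" where
  "simple_graph n E \<longleftrightarrow> (\<forall>x y. E x y \<longrightarrow> x < n \<and> y < n \<and> x \<noteq> y \<and> E y x)"

definition bipartite :: "nat \<Rightarrow> (nat \<Rightarrow> nat \<Rightarrow> bool) \<Rightarrow> bool" where
  "bipartite n E \<longleftrightarrow> (\<exists>S \<subseteq> {..<n}. \<forall>x<n. \<forall>y<n. E x y \<longrightarrow> (x \<in> S \<longleftrightarrow> y \<notin> S))"

fun is_walk :: "(nat \<Rightarrow> nat \<Rightarrow> bool) \<Rightarrow> nat \<Rightarrow> nat list \<Rightarrow> bool" where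
  "is_walk E x [] = True"
| "is_walk E x (y # ys) = (E x y \<and> is_walk E y ys)"

definition diam_le :: "nat \<Rightarrow> (nat \<Rightarrow> nat \<Rightarrow> bool) \<Rightarrow> nat \<Rightarrow> bool" where
  "diam_le n E k \<longleftrightarrow> (\<forall>x<n. \<forall>y<n. \<exists>xs. length xs \<le> k \<and> is_walk E x xs \<and> last (x # xs) = y)"

definition deg :: "nat \<Rightarrow> (nat \<Rightarrow> nat \<Rightarrow> bool) \<Rightarrow> nat \<Rightarrow> nat" where
  "deg n E x = card {y. y < n \<and> E x y}"

definition num_edges :: "nat \<Rightarrow> (nat \<Rightarrow> nat \<Rightarrow> bool) \<Rightarrow> nat" where
  "num_edges n E = card {{x, y} | x y. x < n \<and> y < n \<and> E x y}"

definition codeg :: "nat \<Rightarrow> (nat \<Rightarrow> nat \<Rightarrow> bool) \<Rightarrow> nat \<Rightarrow> nat \<Rightarrow> nat" where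
  "codeg n E x y = card {z. z < n \<and> E x z \<and> E y z}"

definition adj_mat :: "nat \<Rightarrow> (nat \<Rightarrow> nat \<Rightarrow> bool) \<Rightarrow> real mat" where
  "adj_mat n E = mat n n (\<lambda>(i, j). if E i j then 1 else 0)"

definition adj_eigs :: "nat \<Rightarrow> (nat \<Rightarrow> nat \<Rightarrow> bool) \<Rightarrow> real list" where
  "adj_eigs n E = (THE L. length L = n \<and> sorted_wrt (\<ge>) L \<and>
      char_poly (adj_mat n E) = prod_list (map (\<lambda>a. [:- a, 1:]) L))"

text \<open>lambda_j for 1 <= j <= n.\<close>
definition eig :: "nat \<Rightarrow> (nat \<Rightarrow> nat \<Rightarrow> bool) \<Rightarrow> nat \<Rightarrow> real" where
  "eig n E j = adj_eigs n E ! (j - 1)"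

text \<open>The class G_{k,n,p}; the constants hidden in the O-terms and the o(1)-term are
  explicit parameters: Cd (degrees), Ce (edges), Cc (codegrees), Cphi (eigenvector),
  eps (the o(1) of (vii)), Cl (second eigenvalues).\<close>
definition in_Gclass ::
  "nat \<Rightarrow> real \<Rightarrow> real \<Rightarrow> real \<Rightarrow> real \<Rightarrow> real \<Rightarrow> real \<Rightarrow> real \<Rightarrow>
   nat \<Rightarrow> (nat \<Rightarrow> nat \<Rightarrow> bool) \<Rightarrow> bool" where
  "in_Gclass k p Cd Ce Cc Cphi eps Cl n E \<longleftrightarrow>
     simple_graph n E \<and>
     \<not> bipartite n E \<and>
     diam_le n E k \<and>
     (\<forall>x<n. \<bar>real (deg n E x) - p * n\<bar> \<le> Cd * sqrt (p * n * ln n)) \<and>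
     \<bar>2 * real (num_edges n E) - p * n^2\<bar> \<le> Ce * sqrt (p * n^2 * ln n) \<and>
     (\<forall>x<n. \<forall>y<n. x \<noteq> y \<longrightarrow>
        \<bar>real (codeg n E x y) - p^2 * n\<bar> \<le> Cc * max (sqrt (p^2 * n * ln n)) (ln n)) \<and>
     (\<exists>\<phi> \<in> carrier_vec n. adj_mat n E *\<^sub>v \<phi> = eig n E 1 \<cdot>\<^sub>v \<phi> \<and>
        (\<Sum>i<n. (\<phi> $ i)^2) = 1 \<and>
        (\<forall>i<n. \<bar>\<phi> $ i - 1 / sqrt n\<bar> \<le> Cphi * (ln n powr (3/2) / (sqrt p * n * ln (p * n))))) \<and>
     \<bar>eig n E 1 - p * n\<bar> \<le> eps * (p * n) \<and>
     max \<bar>eig n E 2\<bar> \<bar>eig n E n\<bar> \<le> Cl * sqrt (p * n)"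

definition trans_prob :: "nat \<Rightarrow> (nat \<Rightarrow> nat \<Rightarrow> bool) \<Rightarrow> nat \<Rightarrow> nat \<Rightarrow> real" where
  "trans_prob n E x y = (if E x y then 1 / real (deg n E x) else 0)"

fun path_prob :: "nat \<Rightarrow> (nat \<Rightarrow> nat \<Rightarrow> bool) \<Rightarrow> nat \<Rightarrow> nat list \<Rightarrow> real" where
  "path_prob n E x [] = 1"
| "path_prob n E x (y # ys) = trans_prob n E x y * path_prob n E y ys"

text \<open>P_w[X_i = v]: sum over all trajectories X_1..X_i with X_i = v.\<close>
definition prob_at :: "nat \<Rightarrow> (nat \<Rightarrow> nat \<Rightarrow> bool) \<Rightarrow> nat \<Rightarrow> nat \<Rightarrow> nat \<Rightarrow> real" where
  "prob_at n E w i v =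
     (\<Sum>xs\<in>{xs. set xs \<subseteq> {..<n} \<and> length xs = i}.
        if last (w # xs) = v then path_prob n E w xs else 0)"

definition prob_hit :: "nat \<Rightarrow> (nat \<Rightarrow> nat \<Rightarrow> bool) \<Rightarrow> nat \<Rightarrow> nat \<Rightarrow> nat \<Rightarrow> real" where
  "prob_hit n E w i v =
     (\<Sum>xs\<in>{xs. set xs \<subseteq> {..<n} \<and> length xs = i}.
        if last (w # xs) = v \<and> v \<notin> set (butlast (w # xs)) then path_prob n E w xs else 0)"

end

theory Submission
  imports Defs
begin

lemma trans_nonneg: "trans_prob n E x y \<ge> 0"
  by (simp add: trans_prob_def)

lemma path_nonneg: "path_prob n E x xs \<ge> 0"
  by (induction xs arbitrary: x) (auto simp: trans_nonneg)

lemma row_sum: "(\<Sum>y<n. trans_prob n E x y) \<le> 1"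
proof -
  have "(\<Sum>y<n. trans_prob n E x y) = (\<Sum>y\<in>{y. y < n \<and> E x y}. 1 / real (deg n E x))"
    unfolding trans_prob_def by (rule sum.mono_neutral_cong_right) auto
  also have "\<dots> = real (deg n E x) * (1 / real (deg n E x))" by (simp add: deg_def)
  also have "\<dots> \<le> 1" by (cases "deg n E x = 0") auto
  finally show ?thesis .
qed

lemma sum_lists_Suc:
  assumes "finite A"
  shows "sum f {xs. set xs \<subseteq> A \<and> length xs = Suc m} =
    (\<Sum>y\<in>A. \<Sum>ys\<in>{xs. set xs \<subseteq> A \<and> length xs = m}. f (y#ys))"
proof -
  have "sum f {xs. set xs \<subseteq> A \<and> length xs = Suc m} =
     sum (f \<circ> (\<lambda>(xs, n). n#xs)) ({xs. set xs \<subseteq> A \<and> length xs = m} \<times> A)"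
    unfolding lists_length_Suc_eq by (rule sum.reindex) (rule inj_split_Cons)
  also have "\<dots> = (\<Sum>ys\<in>{xs. set xs \<subseteq> A \<and> length xs = m}. \<Sum>y\<in>A. f (y#ys))"
    by (subst sum.cartesian_product) (simp add: comp_def split_beta)
  also have "\<dots> = (\<Sum>y\<in>A. \<Sum>ys\<in>{xs. set xs \<subseteq> A \<and> length xs = m}. f (y#ys))"
    by (rule sum.swap)
  finally show ?thesis .
qed

lemma marks_bound:
  assumes d: "\<And>x. trans_prob n E x v \<le> d" "d \<ge> 0"
  shows "(\<Sum>xs\<in>{xs. set xs \<subseteq> {..<n} \<and> length xs = length ms}.
     if list_all2 (\<lambda>b y. b \<longrightarrow> y = v) ms xs then path_prob n E x xs else 0)
     \<le> d ^ length (filter id ms)"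
proof (induction ms arbitrary: x)
  case Nil
  have "{xs::nat list. set xs \<subseteq> {..<n} \<and> length xs = length []} = {[]}" by auto
  then show ?case by simp
next
  case (Cons b ms)
  define S where "S y = (\<Sum>xs\<in>{xs. set xs \<subseteq> {..<n} \<and> length xs = length ms}.
     if list_all2 (\<lambda>b y. b \<longrightarrow> y = v) ms xs then path_prob n E y xs else 0)" for y
  have S: "S y \<le> d ^ length (filter id ms)" for y unfolding S_def by (rule Cons.IH)
  have S0: "S y \<ge> 0" for y unfolding S_def by (rule sum_nonneg) (auto simp: path_nonneg)
  have "(\<Sum>xs\<in>{xs. set xs \<subseteq> {..<n} \<and> length xs = length (b#ms)}.
     if list_all2 (\<lambda>b y. b \<longrightarrow> y = v) (b#ms) xs then path_prob n E x xs else 0)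
    = (\<Sum>y<n. if b \<longrightarrow> y = v then trans_prob n E x y * S y else 0)"
    apply (simp add: sum_lists_Suc S_def sum_distrib_left if_distrib cong: if_cong)
    apply (rule sum.cong[OF refl])
    apply auto
    done
  also have "\<dots> \<le> d ^ length (filter id (b#ms))"
  proof (cases b)
    case True
    have "(\<Sum>y<n. if b \<longrightarrow> y = v then trans_prob n E x y * S y else 0)
       = (if v < n then trans_prob n E x v * S v else 0)"
      using True by (simp add: sum.delta')
    also have "\<dots> \<le> d * d ^ length (filter id ms)"
      using S0 d by (auto intro!: mult_mono S zero_le_power)
    finally show ?thesis using True by simp
  next
    case False
    have "(\<Sum>y<n. if b \<longrightarrow> y = v then trans_prob n E x y * S y else 0)
       = (\<Sum>y<n. trans_prob n E x y * S y)" using False by simp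
    also have "\<dots> \<le> (\<Sum>y<n. trans_prob n E x y * d ^ length (filter id ms))"
      by (rule sum_mono) (auto intro!: mult_left_mono S trans_nonneg)
    also have "\<dots> = (\<Sum>y<n. trans_prob n E x y) * d ^ length (filter id ms)"
      by (simp add: sum_distrib_right)
    also have "\<dots> \<le> d ^ length (filter id ms)"
      using row_sum d(2) by (auto intro!: mult_left_le_one_le zero_le_power sum_nonneg trans_nonneg)
    finally show ?thesis using False by simp
  qed
  finally show ?case .
qed


lemma count_marks:
  assumes "j < i - 1" "i \<ge> 1"
  shows "length (filter id (map (\<lambda>t. t = j \<or> t = i - 1) [0..<i])) = 2"
proof -
  have "length (filter id (map (\<lambda>t. t = j \<or> t = i - 1) [0..<i]))
      = card {t. t < i \<and> (t = j \<or> t = i - 1)}"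
    unfolding length_filter_conv_card by (intro arg_cong[where f=card]) auto
  also have "{t. t < i \<and> (t = j \<or> t = i - 1)} = {j, i - 1}" using assms by auto
  also have "card {j, i - 1} = 2" using assms by simp
  finally show ?thesis .
qed

lemma main_comb:
  assumes d: "\<And>x. trans_prob n E x v \<le> d" "d \<ge> 0" and vw: "v \<noteq> w"
  shows "0 \<le> prob_at n E w i v - prob_hit n E w i v"
    and "prob_at n E w i v - prob_hit n E w i v \<le> real i * d^2"
proof -
  define L where "L = {xs. set xs \<subseteq> {..<n} \<and> length xs = i}"
  define ms where "ms j = map (\<lambda>t. t = j \<or> t = i - 1) [0..<i]" for j
  define R where "R = (\<lambda>b y. b \<longrightarrow> y = v)"
  have fin: "finite L" unfolding L_def by (rule finite_lists_length_eq) simp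
  have eq: "prob_at n E w i v - prob_hit n E w i v =
    (\<Sum>xs\<in>L. if last (w#xs) = v \<and> v \<in> set (butlast (w#xs)) then path_prob n E w xs else 0)"
    unfolding prob_at_def prob_hit_def L_def[symmetric] sum_subtractf[symmetric]
    by (rule sum.cong) auto
  show "0 \<le> prob_at n E w i v - prob_hit n E w i v"
    unfolding eq by (rule sum_nonneg) (auto simp: path_nonneg)
  have tm: "(if last (w#xs) = v \<and> v \<in> set (butlast (w#xs)) then path_prob n E w xs else 0)
     \<le> (\<Sum>j<i-1. if list_all2 R (ms j) xs then path_prob n E w xs else 0)" if xs: "xs \<in> L" for xs
  proof (cases "last (w#xs) = v \<and> v \<in> set (butlast (w#xs))")
    case True
    have len: "length xs = i" using xs L_def by auto
    have "xs \<noteq> []" using True vw by auto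
    hence i1: "i \<ge> 1" using len by (cases xs) auto
    have lastv: "xs ! (i - 1) = v" using True \<open>xs \<noteq> []\<close> len by (simp add: last_conv_nth)
    have "v \<in> set (butlast xs)" using True vw \<open>xs \<noteq> []\<close> by auto
    then obtain j where j: "j < i - 1" "butlast xs ! j = v"
      using len by (auto simp: in_set_conv_nth)
    have xj: "xs ! j = v" using j len by (simp add: nth_butlast)
    have "list_all2 R (ms j) xs"
      using len xj lastv unfolding ms_def R_def by (auto simp: list_all2_conv_all_nth)
    hence "path_prob n E w xs = (if list_all2 R (ms j) xs then path_prob n E w xs else 0)" by simp
    also have "\<dots> \<le> (\<Sum>j<i-1. if list_all2 R (ms j) xs then path_prob n E w xs else 0)"
      by (rule member_le_sum) (use j in \<open>auto simp: path_nonneg\<close>)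
    finally show ?thesis using True by simp
  next
    case False
    then show ?thesis by (auto intro!: sum_nonneg simp: path_nonneg)
  qed
  have "prob_at n E w i v - prob_hit n E w i v
     \<le> (\<Sum>xs\<in>L. \<Sum>j<i-1. if list_all2 R (ms j) xs then path_prob n E w xs else 0)"
    unfolding eq by (rule sum_mono) (rule tm)
  also have "\<dots> = (\<Sum>j<i-1. \<Sum>xs\<in>L. if list_all2 R (ms j) xs then path_prob n E w xs else 0)"
    by (rule sum.swap)
  also have "\<dots> \<le> (\<Sum>j<i-1. d^2)"
  proof (rule sum_mono)
    fix j assume j: "j \<in> {..<i-1}"
    have lm: "length (ms j) = i" by (simp add: ms_def)
    have "(\<Sum>xs\<in>L. if list_all2 R (ms j) xs then path_prob n E w xs else 0)
        \<le> d ^ length (filter id (ms j))"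
      using marks_bound[OF d, of "ms j" w] unfolding L_def R_def lm .
    also have "length (filter id (ms j)) = 2"
      unfolding ms_def using j by (intro count_marks) auto
    finally show "(\<Sum>xs\<in>L. if list_all2 R (ms j) xs then path_prob n E w xs else 0) \<le> d^2" .
  qed
  also have "\<dots> = real (i - 1) * d^2" by simp
  also have "\<dots> \<le> real i * d^2" by (intro mult_right_mono) auto
  finally show "prob_at n E w i v - prob_hit n E w i v \<le> real i * d^2" .
qed


theorem lemma5p4:
  fixes k i :: nat and p :: "nat \<Rightarrow> real" and eps :: "nat \<Rightarrow> real"
    and Cd Ce Cc Cphi Cl c :: real
  assumes "k \<ge> 2"
    and "\<forall>\<^sub>F n in sequentially. ln n / real n powr ((real k - 1) / real k) \<le> p n"
    and "\<forall>n. p n \<le> 1"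
    and "c > 0"
    and "\<forall>\<^sub>F n in sequentially. 1 - p n \<ge> c * (ln n ^ 4 / n)"
    and "eps \<longlonglongrightarrow> 0"
  shows "\<exists>C N. \<forall>n \<ge> N. \<forall>E. in_Gclass k (p n) Cd Ce Cc Cphi (eps n) Cl n E \<longrightarrow>
           (\<forall>v<n. \<forall>w<n. v \<noteq> w \<longrightarrow>
              \<bar>prob_hit n E w i v - prob_at n E w i v\<bar> \<le> C / ((p n)^2 * (real n)^2))"
proof -
  obtain N0 where N0: "\<And>n. n \<ge> N0 \<Longrightarrow> ln n / real n powr ((real k - 1) / real k) \<le> p n"
    using assms(2) unfolding eventually_sequentially by blast
  define M where "M = 4 * Cd^2 + 1"
  have M: "M > 0" "M \<ge> 4 * Cd^2" unfolding M_def by (auto intro: add_nonneg_pos)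
  define N where "N = max (max N0 3) (nat \<lceil>M powr real k\<rceil>)"
  have kpos: "real k > 0" using assms(1) by simp
  show ?thesis
  proof (intro exI[of _ "4 * real i"] exI[of _ N] allI impI)
    fix n E v w
    assume n: "n \<ge> N" and G: "in_Gclass k (p n) Cd Ce Cc Cphi (eps n) Cl n E"
      and "v < n" "w < n" "v \<noteq> w"
      have n3: "n \<ge> 3" and nN0: "n \<ge> N0" and nM: "real n \<ge> M powr real k"
        using n unfolding N_def by auto
      have npos: "real n > 0" using n3 by simp
      have lnpos: "ln (real n) > 0" using n3 by simp
      have plow: "ln n / real n powr ((real k - 1) / real k) \<le> p n" using N0[OF nN0] .
      have "real n * (ln n / real n powr ((real k - 1) / real k))
          = ln n * (real n powr 1 / real n powr ((real k - 1) / real k))"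
        using npos by simp
      also have "real n powr 1 / real n powr ((real k - 1) / real k)
          = real n powr (1 - (real k - 1) / real k)"
        by (rule powr_diff[symmetric])
      also have "1 - (real k - 1) / real k = 1 / real k" using kpos by (simp add: field_simps)
      finally have e1: "real n * (ln n / real n powr ((real k - 1) / real k)) = ln n * real n powr (1 / real k)" .
      have "real n powr (1 / real k) \<ge> (M powr real k) powr (1 / real k)"
        using nM M by (intro powr_mono2) auto
      also have "(M powr real k) powr (1 / real k) = M"
        using kpos M by (simp add: powr_powr)
      finally have npk: "real n powr (1 / real k) \<ge> M" .
      have "real n * (ln n / real n powr ((real k - 1) / real k)) \<le> real n * p n"
        using npos by (intro mult_left_mono[OF plow]) simp
      hence "p n * real n \<ge> ln n * real n powr (1 / real k)"
        unfolding e1 by (simp add: mult.commute)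
      moreover have "ln n * real n powr (1 / real k) \<ge> ln n * M"
        using npk lnpos by (intro mult_left_mono) auto
      ultimately have pn: "p n * real n \<ge> M * ln n" by (simp add: mult.commute)
      have "M * ln n > 0" using M lnpos by simp
      hence pnpos: "p n * real n > 0" using pn by linarith
      have "4 * Cd^2 * ln n \<le> M * ln n" using M lnpos by (intro mult_right_mono) auto
      hence pn4: "p n * real n \<ge> 4 * Cd^2 * ln n" using pn by linarith
      have dev: "Cd * sqrt (p n * real n * ln n) \<le> p n * real n / 2"
      proof (cases "Cd \<le> 0")
        case True
        have "0 \<le> p n * real n * ln n" using pnpos lnpos by simp
        hence "Cd * sqrt (p n * real n * ln n) \<le> 0" using True by (intro mult_nonpos_nonneg) auto
        then show ?thesis using pnpos by linarith
      next
        case False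
        have "Cd * sqrt (p n * real n * ln n) = sqrt (Cd^2 * (p n * real n * ln n))"
          using False by (simp add: real_sqrt_mult)
        also have "\<dots> \<le> sqrt ((p n * real n / 2)^2)"
        proof (rule real_sqrt_le_mono)
          have "Cd^2 * (p n * real n * ln n) = (p n * real n) * (Cd^2 * ln n)" by (simp add: algebra_simps)
          also have "\<dots> \<le> (p n * real n) * (p n * real n / 4)"
            using pn4 pnpos by (intro mult_left_mono) auto
          also have "\<dots> = (p n * real n / 2)^2" by (simp add: power2_eq_square)
          finally show "Cd^2 * (p n * real n * ln n) \<le> (p n * real n / 2)^2" .
        qed
        also have "\<dots> = p n * real n / 2" using pnpos by simp
        finally show ?thesis .
      qed
      have deg: "real (deg n E x) \<ge> p n * real n / 2" if "x < n" for x
      proof -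
        have "\<bar>real (deg n E x) - p n * n\<bar> \<le> Cd * sqrt (p n * n * ln n)"
          using G that unfolding in_Gclass_def by blast
        thus ?thesis using dev by (simp add: mult.commute)
      qed
      have sg: "simple_graph n E" using G unfolding in_Gclass_def by blast
      define d where "d = 2 / (p n * real n)"
      have d0: "d \<ge> 0" using pnpos unfolding d_def by simp
      have tp: "trans_prob n E x v \<le> d" for x
      proof (cases "E x v")
        case True
        hence "x < n" using sg unfolding simple_graph_def by blast
        hence dx: "real (deg n E x) \<ge> p n * real n / 2" by (rule deg)
        have "trans_prob n E x v = 1 / real (deg n E x)" using True by (simp add: trans_prob_def)
        also have "\<dots> \<le> 1 / (p n * real n / 2)"
          using dx pnpos by (intro divide_left_mono) auto
        also have "\<dots> = d" unfolding d_def by simp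
        finally show ?thesis .
      next
        case False thus ?thesis using d0 by (simp add: trans_prob_def)
      qed
      have b1: "0 \<le> prob_at n E w i v - prob_hit n E w i v"
        and b2: "prob_at n E w i v - prob_hit n E w i v \<le> real i * d^2"
        using main_comb[OF tp d0 \<open>v \<noteq> w\<close>] by auto
      have "real i * d^2 = 4 * real i / ((p n)^2 * (real n)^2)"
        unfolding d_def by (simp add: power2_eq_square field_simps)
      thus "\<bar>prob_hit n E w i v - prob_at n E w i v\<bar> \<le> 4 * real i / ((p n)^2 * (real n)^2)"
        using b1 b2 by simp
  qed
qed

end
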